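(* Let $\Gamma$ be a finitely generated residually nilpotent group, let $F$ be a free group of rank $\mathrm{rk}(\Gamma)$ and write $\Gamma = F/K$. Let $G = F/N$ be a weakly para-$\Gamma$ group. (1) If there exists an automorphism $\phi: F\to F$ with $\phi(N) \geq K$ (i.e. $G$ is of Type I), then $G \cong \Gamma$. (2) If there exists an automorphism $\phi: F \to F$ with $\phi(N) \lneq K$ (i.e. $G$ is of Type II), then $G$ is not residually nilpotent; in particular $G$ is not a para-$\Gamma$ group.
   Context: The lower central series is $\gamma_1(G)=G$, $\gamma_k(G)=[G,\gamma_{k-1}(G)]$. A group is residually nilpotent if $\bigcap_k \gamma_k(G)=\{1\}$. $\mathrm{rk}(\Gamma)$ is the minimum size of a generating set of $\Gamma$. For a finitely generated residually nilpotent group $\Gamma$, a group $G$ is weakly para-$\Gamma$ if $G/\gamma_k(G)\cong \Gamma/\gamma_k(\Gamma)$ for all $k\geq 1$; it is para-$\Gamma$ if moreover $G$ is residually nilpotent. *)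

theory Defs
  imports "HOL-Algebra.Algebra"
begin

definition comm_subgroup :: "('a, 'b) monoid_scheme \<Rightarrow> 'a set \<Rightarrow> 'a set" where
  "comm_subgroup G H = generate G {x \<otimes>\<^bsub>G\<^esub> y \<otimes>\<^bsub>G\<^esub> inv\<^bsub>G\<^esub> x \<otimes>\<^bsub>G\<^esub> inv\<^bsub>G\<^esub> y
       | x y. x \<in> carrier G \<and> y \<in> H}"

(* lower central series, indexed as in the paper: gamma G 1 = G,
   gamma G (k+1) = [G, gamma G k]; the value at 0 is set to G as a harmless default *)
fun lcs :: "('a, 'b) monoid_scheme \<Rightarrow> nat \<Rightarrow> 'a set" where
  "lcs G 0 = carrier G"
| "lcs G (Suc 0) = carrier G"
| "lcs G (Suc (Suc k)) = comm_subgroup G (lcs G (Suc k))"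

definition residually_nilpotent :: "('a, 'b) monoid_scheme \<Rightarrow> bool" where
  "residually_nilpotent G \<longleftrightarrow> (\<Inter>k\<in>{1..}. lcs G k) = {\<one>\<^bsub>G\<^esub>}"

definition finitely_generated :: "('a, 'b) monoid_scheme \<Rightarrow> bool" where
  "finitely_generated G \<longleftrightarrow> (\<exists>S. S \<subseteq> carrier G \<and> finite S \<and> generate G S = carrier G)"

definition group_rank :: "('a, 'b) monoid_scheme \<Rightarrow> nat" where
  "group_rank G = (LEAST n. \<exists>S. S \<subseteq> carrier G \<and> finite S \<and> card S = n \<and> generate G S = carrier G)"

definition word_eval :: "('a, 'b) monoid_scheme \<Rightarrow> (bool \<times> 'a) list \<Rightarrow> 'a" where
  "word_eval G w = foldr (\<lambda>(b, s) acc. (if b then inv\<^bsub>G\<^esub> s else s) \<otimes>\<^bsub>G\<^esub> acc) w \<one>\<^bsub>G\<^esub>"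

definition reduced_word :: "(bool \<times> 'a) list \<Rightarrow> bool" where
  "reduced_word w \<longleftrightarrow> (\<forall>i. Suc i < length w \<longrightarrow>
      \<not> (snd (w ! i) = snd (w ! Suc i) \<and> fst (w ! i) \<noteq> fst (w ! Suc i)))"

definition free_basis :: "('a, 'b) monoid_scheme \<Rightarrow> 'a set \<Rightarrow> bool" where
  "free_basis F S \<longleftrightarrow> S \<subseteq> carrier F \<and> generate F S = carrier F \<and>
     (\<forall>w. w \<noteq> [] \<and> set (map snd w) \<subseteq> S \<and> reduced_word w \<longrightarrow> word_eval F w \<noteq> \<one>\<^bsub>F\<^esub>)"

definition free_group_of_rank :: "('a, 'b) monoid_scheme \<Rightarrow> nat \<Rightarrow> bool" where
  "free_group_of_rank F r \<longleftrightarrow> group F \<and> (\<exists>S. free_basis F S \<and> finite S \<and> card S = r)"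

definition weakly_para :: "('g, 'c) monoid_scheme \<Rightarrow> ('h, 'd) monoid_scheme \<Rightarrow> bool" where
  "weakly_para \<Gamma> G \<longleftrightarrow> (\<forall>k\<ge>1. G Mod (lcs G k) \<cong> \<Gamma> Mod (lcs \<Gamma> k))"

definition para :: "('g, 'c) monoid_scheme \<Rightarrow> ('h, 'd) monoid_scheme \<Rightarrow> bool" where
  "para \<Gamma> G \<longleftrightarrow> weakly_para \<Gamma> G \<and> residually_nilpotent G"

end

theory Submission
  imports Defs
begin


definition accg :: "('a,'b) monoid_scheme \<Rightarrow> 'a set \<Rightarrow> 'a set \<Rightarrow> bool" where
"accg G A B \<longleftrightarrow> (\<forall>S::nat \<Rightarrow> 'a set. (\<forall>n. subgroup (S n) G \<and> B \<subseteq> S n \<and> S n \<subseteq> A \<and> S n \<subseteq> S (Suc n))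
    \<longrightarrow> (\<exists>m. \<forall>n\<ge>m. S n = S m))"

lemma accg_refl: "accg G A A"
  unfolding accg_def by (metis order_antisym le_refl)

lemma intsub_mult:
  fixes J :: "int set"
  assumes z: "0 \<in> J" and d: "\<And>a b. a \<in> J \<Longrightarrow> b \<in> J \<Longrightarrow> a - b \<in> J" and x: "x \<in> J"
  shows "x * k \<in> J"
proof -
  have neg: "- a \<in> J" if "a \<in> J" for a using d[OF z that] by simp
  have add: "a + b \<in> J" if "a \<in> J" "b \<in> J" for a b using d[OF that(1) neg[OF that(2)]] by simp
  have nat: "x * int n \<in> J" for n
    by (induction n) (auto simp: z algebra_simps add x)
  show ?thesis
  proof (cases "k \<ge> 0")
    case True thus ?thesis using nat[of "nat k"] by simp
  next
    case False thus ?thesis using neg[OF nat[of "nat (-k)"]] by simp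
  qed
qed

lemma int_chain_stable:
  fixes I :: "nat \<Rightarrow> int set"
  assumes z: "\<And>n. 0 \<in> I n" and d: "\<And>n a b. a \<in> I n \<Longrightarrow> b \<in> I n \<Longrightarrow> a - b \<in> I n"
    and up: "\<And>n. I n \<subseteq> I (Suc n)"
  shows "\<exists>m. \<forall>n\<ge>m. I n = I m"
proof -
  have mono: "I m \<subseteq> I n" if "m \<le> n" for m n
    using lift_Suc_mono_le[of I, OF up that] .
  define U where "U = (\<Union>n. I n)"
  have Uz: "0 \<in> U" using z U_def by blast
  have Ud: "a - b \<in> U" if ab: "a \<in> U" "b \<in> U" for a b
  proof -
    obtain m1 m2 where "a \<in> I m1" "b \<in> I m2" using ab U_def by blast
    hence "a \<in> I (max m1 m2)" "b \<in> I (max m1 m2)" using mono by (meson max.cobounded1 max.cobounded2 subsetD)+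
    thus ?thesis using d U_def by blast
  qed
  have Un: "- a \<in> U" if "a \<in> U" for a using Ud[OF Uz that] by simp
  show ?thesis
  proof (cases "U = {0}")
    case True
    hence "I n = {0}" for n using z U_def by blast
    thus ?thesis by auto
  next
    case False
    then obtain a where a: "a \<in> U" "a \<noteq> 0" using Uz by blast
    have ex: "\<exists>p::nat. p > 0 \<and> int p \<in> U"
    proof (cases "a > 0")
      case True thus ?thesis using a by (intro exI[of _ "nat a"]) auto
    next
      case False thus ?thesis using a Un[OF a(1)] by (intro exI[of _ "nat (-a)"]) auto
    qed
    define d where "d = (LEAST p::nat. p > 0 \<and> int p \<in> U)"
    have dU: "d > 0 \<and> int d \<in> U" unfolding d_def by (rule LeastI_ex[OF ex])
    have dmin: "\<And>p. p > 0 \<and> int p \<in> U \<Longrightarrow> d \<le> p" unfolding d_def by (rule Least_le)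
    have Usub: "u \<in> {int d * k | k. True}" if "u \<in> U" for u
    proof -
      have "int d * (u div int d) \<in> U" using intsub_mult[OF Uz Ud conjunct2[OF dU], of "u div int d"] by simp
      hence r: "u mod int d \<in> U" using Ud[OF that] by (simp add: minus_div_mult_eq_mod[symmetric] mult.commute)
      have r0: "u mod int d = 0"
      proof (rule ccontr)
        assume ne: "u mod int d \<noteq> 0"
        have ge: "u mod int d \<ge> 0" using dU by simp
        have lt: "u mod int d < int d" using dU by simp
        have "nat (u mod int d) > 0" using ne ge by linarith
        moreover have "int (nat (u mod int d)) \<in> U" using r ge by simp
        ultimately have "d \<le> nat (u mod int d)" using dmin by blast
        thus False using lt ge by linarith
      qed
      have "u = int d * (u div int d)" using r0 by (metis add_0_right mult_div_mod_eq)
      thus ?thesis by blast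
    qed
    obtain m where m: "int d \<in> I m" using dU U_def by blast
    have "\<forall>n\<ge>m. I n = I m"
    proof (intro allI impI)
      fix n assume "m \<le> n"
      have "I n \<subseteq> I m"
      proof
        fix u assume "u \<in> I n"
        hence "u \<in> U" using U_def by blast
        then obtain k where "u = int d * k" using Usub by blast
        thus "u \<in> I m" using intsub_mult[OF z d m] by simp
      qed
      thus "I n = I m" using mono[OF \<open>m \<le> n\<close>] by blast
    qed
    thus ?thesis by blast
  qed
qed


context group begin

lemma inv_cancel_l [simp]: "x \<in> carrier G \<Longrightarrow> y \<in> carrier G \<Longrightarrow> inv x \<otimes> (x \<otimes> y) = y"
  by (simp add: m_assoc[symmetric])
lemma inv_cancel_r [simp]: "x \<in> carrier G \<Longrightarrow> y \<in> carrier G \<Longrightarrow> x \<otimes> (inv x \<otimes> y) = y"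
  by (simp add: m_assoc[symmetric])

lemma accgI:
  assumes "\<And>S. (\<And>n. subgroup (S n) G) \<Longrightarrow> (\<And>n. B \<subseteq> S n) \<Longrightarrow> (\<And>n. S n \<subseteq> A) \<Longrightarrow> (\<And>n. S n \<subseteq> S (Suc n))
     \<Longrightarrow> \<exists>m. \<forall>n\<ge>m. S n = S m"
  shows "accg G A B"
  using assms unfolding accg_def by blast

lemma accgD:
  assumes "accg G A B" "\<And>n. subgroup (S n) G" "\<And>n. B \<subseteq> S n" "\<And>n. S n \<subseteq> A" "\<And>n. S n \<subseteq> S (Suc n)"
  shows "\<exists>m. \<forall>n\<ge>m. S n = S m"
  using assms unfolding accg_def by blast

lemma accg_ext:
  assumes A: "subgroup A G" and C: "subgroup C G" and BC: "B \<subseteq> C" and CA: "C \<subseteq> A"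
    and nC: "\<And>a c. a \<in> A \<Longrightarrow> c \<in> C \<Longrightarrow> a \<otimes> c \<otimes> inv a \<in> C"
    and acc1: "accg G A C" and acc2: "accg G C B"
  shows "accg G A B"
proof (rule accgI)
  fix S assume sg: "\<And>n. subgroup (S n) G" and BS: "\<And>n. B \<subseteq> S n" and SA: "\<And>n. S n \<subseteq> A"
    and up: "\<And>n. S n \<subseteq> S (Suc n)"
  have mono: "S m \<subseteq> S n" if "m \<le> n" for m n using lift_Suc_mono_le[of S, OF up that] .
  define U where "U n = {s \<otimes> c | s c. s \<in> S n \<and> c \<in> C}" for n
  have Ccar: "C \<subseteq> carrier G" using C subgroup.subset by blast
  have Scar: "S n \<subseteq> carrier G" for n using sg subgroup.subset by blast
  have Usg: "subgroup (U n) G" for n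
  proof (rule subgroupI)
    show "U n \<subseteq> carrier G" using Ccar Scar by (auto simp: U_def)
    show "U n \<noteq> {}" using subgroup.one_closed[OF sg] subgroup.one_closed[OF C] by (auto simp: U_def)
  next
    fix a assume "a \<in> U n"
    then obtain s c where sc: "a = s \<otimes> c" "s \<in> S n" "c \<in> C" by (auto simp: U_def)
    have s: "s \<in> carrier G" "inv s \<in> S n" using sc Scar subgroup.m_inv_closed[OF sg] by auto
    have c: "c \<in> carrier G" using sc Ccar by auto
    have "inv a = inv s \<otimes> (s \<otimes> inv c \<otimes> inv s)" using s c sc by (simp add: inv_mult_group m_assoc)
    moreover have "s \<otimes> inv c \<otimes> inv s \<in> C" using nC[of s "inv c"] sc SA subgroup.m_inv_closed[OF C] by blast
    ultimately show "inv a \<in> U n" using s by (auto simp: U_def)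
  next
    fix a b assume "a \<in> U n" "b \<in> U n"
    then obtain s c s' c' where sc: "a = s \<otimes> c" "s \<in> S n" "c \<in> C" "b = s' \<otimes> c'" "s' \<in> S n" "c' \<in> C"
      by (auto simp: U_def)
    have car: "s \<in> carrier G" "c \<in> carrier G" "s' \<in> carrier G" "c' \<in> carrier G" using sc Scar Ccar by auto
    have "a \<otimes> b = (s \<otimes> s') \<otimes> ((inv s' \<otimes> c \<otimes> inv (inv s')) \<otimes> c')"
      using car sc by (simp add: m_assoc)
    moreover have "inv s' \<otimes> c \<otimes> inv (inv s') \<in> C"
      using nC[of "inv s'" c] sc SA subgroup.m_inv_closed[OF sg] by blast
    moreover have "s \<otimes> s' \<in> S n" using sc subgroup.m_closed[OF sg] by blast
    ultimately show "a \<otimes> b \<in> U n" using sc subgroup.m_closed[OF C] by (auto simp: U_def)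
  qed
  have CU: "C \<subseteq> U n" for n
  proof
    fix c assume "c \<in> C"
    hence "c = \<one> \<otimes> c" using Ccar by auto
    thus "c \<in> U n" using \<open>c \<in> C\<close> subgroup.one_closed[OF sg] unfolding U_def by blast
  qed
  have UA: "U n \<subseteq> A" for n using SA CA subgroup.m_closed[OF A] unfolding U_def by blast
  have Uup: "U n \<subseteq> U (Suc n)" for n using up by (auto simp: U_def)
  obtain m1 where m1: "\<forall>n\<ge>m1. U n = U m1" using accgD[of A C U, OF acc1 Usg CU UA Uup] by blast
  have Tsg: "subgroup (S n \<inter> C) G" for n using subgroups_Inter_pair[OF sg C] .
  have ex2: "\<exists>m. \<forall>n\<ge>m. S n \<inter> C = S m \<inter> C"
  proof (rule accgD[of C B "\<lambda>n. S n \<inter> C", OF acc2 Tsg])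
    show "B \<subseteq> S n \<inter> C" for n using BS[of n] BC by blast
    show "S n \<inter> C \<subseteq> C" for n by blast
    show "S n \<inter> C \<subseteq> S (Suc n) \<inter> C" for n using up[of n] by blast
  qed
  then obtain m2 where m2: "\<forall>n\<ge>m2. S n \<inter> C = S m2 \<inter> C" by blast
  define m where "m = max m1 m2"
  have "\<forall>n\<ge>m. S n = S m"
  proof (intro allI impI)
    fix n assume nm: "m \<le> n"
    have "m1 \<le> n" "m1 \<le> m" "m2 \<le> n" "m2 \<le> m" using nm by (auto simp: m_def)
    hence Um: "U n = U m" and Tm: "S n \<inter> C = S m \<inter> C" using m1 m2 by metis+
    have "S n \<subseteq> S m"
    proof
      fix x assume x: "x \<in> S n"
      have "x \<in> carrier G" using x Scar by blast
      hence "x = x \<otimes> \<one>" by simp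
      hence "x \<in> U n" using x subgroup.one_closed[OF C] unfolding U_def by blast
      hence "x \<in> U m" using Um by simp
      then obtain s c where sc: "x = s \<otimes> c" "s \<in> S m" "c \<in> C" by (auto simp: U_def)
      have car: "s \<in> carrier G" "c \<in> carrier G" using sc Scar Ccar by auto
      have "c = inv s \<otimes> x" using sc car by (simp add: m_assoc[symmetric])
      moreover have "inv s \<in> S n" using sc mono[OF nm] subgroup.m_inv_closed[OF sg] by blast
      ultimately have "c \<in> S n" using x subgroup.m_closed[OF sg] by simp
      hence "c \<in> S m" using Tm sc by blast
      thus "x \<in> S m" using sc subgroup.m_closed[OF sg] by simp
    qed
    thus "S n = S m" using mono[OF nm] by blast
  qed
  thus "\<exists>m. \<forall>n\<ge>m. S n = S m" by blast
qed

lemma accg_cyc: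
  assumes A': "subgroup A' G" and A'A: "A' \<subseteq> A" and t: "t \<in> carrier G"
    and rep: "\<And>x. x \<in> A \<Longrightarrow> \<exists>z::int. \<exists>a\<in>A'. x = t [^] z \<otimes> a"
  shows "accg G A A'"
proof (rule accgI)
  fix S assume sg: "\<And>n. subgroup (S n) G" and BS: "\<And>n. A' \<subseteq> S n" and SA: "\<And>n. S n \<subseteq> A"
    and up: "\<And>n. S n \<subseteq> S (Suc n)"
  have mono: "S m \<subseteq> S n" if "m \<le> n" for m n using lift_Suc_mono_le[of S, OF up that] .
  define I where "I n = {z::int. t [^] z \<in> S n}" for n
  have "\<exists>m. \<forall>n\<ge>m. I n = I m"
  proof (rule int_chain_stable)
    show "0 \<in> I n" for n using subgroup.one_closed[OF sg] t by (simp add: I_def)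
    show "a - b \<in> I n" if "a \<in> I n" "b \<in> I n" for n a b
      using that t int_pow_diff[of t a b] subgroup.m_closed[OF sg] subgroup.m_inv_closed[OF sg]
      by (simp add: I_def)
    show "I n \<subseteq> I (Suc n)" for n using up by (auto simp: I_def)
  qed
  then obtain m where m: "\<forall>n\<ge>m. I n = I m" by (elim exE)
  have "\<forall>n\<ge>m. S n = S m"
  proof (intro allI impI)
    fix n assume nm: "m \<le> n"
    have "S n \<subseteq> S m"
    proof
      fix x assume x: "x \<in> S n"
      have "x \<in> A" using x SA by blast
      then obtain z a where za: "a \<in> A'" "x = t [^] (z::int) \<otimes> a" using rep by blast
      have ac: "a \<in> carrier G" using za A' subgroup.subset by blast
      have xc: "x \<in> carrier G" using x sg subgroup.subset by blast
      have "t [^] z = x \<otimes> inv a" using za ac t by (simp add: m_assoc)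
      moreover have "inv a \<in> S n" using za BS subgroup.m_inv_closed[OF sg] by blast
      ultimately have "t [^] z \<in> S n" using x subgroup.m_closed[OF sg] by metis
      hence "z \<in> I n" by (simp add: I_def)
      hence "z \<in> I m" using m nm by metis
      hence "t [^] z \<in> S m" by (simp add: I_def)
      moreover have "a \<in> S m" using za BS by blast
      ultimately show "x \<in> S m" using za subgroup.m_closed[OF sg] by metis
    qed
    thus "S n = S m" using mono[OF nm] by blast
  qed
  thus "\<exists>m. \<forall>n\<ge>m. S n = S m" by blast
qed

lemma generate_subgroup_eq: "subgroup H G \<Longrightarrow> generate G H = H"
  using generate_subgroup_incl[of H H] generate.incl[of _ H G] by blast

lemma accg_fgab:
  assumes D: "subgroup D G" and BN: "B \<lhd> G" and BD: "B \<subseteq> D"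
    and comm: "\<And>x y. x \<in> D \<Longrightarrow> y \<in> D \<Longrightarrow> x \<otimes> y \<otimes> inv x \<otimes> inv y \<in> B"
    and fin: "finite T" and TD: "T \<subseteq> D"
  shows "accg G (generate G (T \<union> B)) B"
  using fin TD
proof (induction T rule: finite_induct)
  case empty
  have "subgroup B G" using BN normal_imp_subgroup by blast
  thus ?case using generate_subgroup_eq accg_refl by simp
next
  case (insert t T)
  have Dc: "D \<subseteq> carrier G" using D subgroup.subset by blast
  have Bsg: "subgroup B G" using BN normal_imp_subgroup by blast
  define A' where "A' = generate G (T \<union> B)"
  define A where "A = generate G (insert t (T \<union> B))"
  have tD: "t \<in> D" using insert by blast
  have tc: "t \<in> carrier G" using tD Dc by blast
  have A'sg: "subgroup A' G" unfolding A'_def using insert Dc BD by (intro generate_is_subgroup) blast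
  have Asg: "subgroup A G" unfolding A_def using insert Dc BD by (intro generate_is_subgroup) blast
  have A'D: "A' \<subseteq> D" unfolding A'_def using insert BD D by (intro generate_subgroup_incl) auto
  have AD: "A \<subseteq> D" unfolding A_def using insert BD D by (intro generate_subgroup_incl) auto
  have BA': "B \<subseteq> A'" unfolding A'_def using generate.incl[of _ "T \<union> B" G] by blast
  have A'A: "A' \<subseteq> A" unfolding A'_def A_def by (intro mono_generate) blast
  have conjD: "d \<otimes> c \<otimes> inv d \<in> A'" if d: "d \<in> D" and c: "c \<in> A'" for d c
  proof -
    have cD: "c \<in> D" using c A'D by blast
    have dc: "d \<in> carrier G" "c \<in> carrier G" using d cD Dc by auto
    have "d \<otimes> c \<otimes> inv d = (d \<otimes> c \<otimes> inv d \<otimes> inv c) \<otimes> c"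
      using dc by (simp add: m_assoc)
    moreover have "d \<otimes> c \<otimes> inv d \<otimes> inv c \<in> A'" using comm[OF d cD] BA' by blast
    ultimately show ?thesis using c subgroup.m_closed[OF A'sg] by metis
  qed
  have acc1: "accg G A A'"
  proof (rule accg_cyc[OF A'sg A'A tc])
    define W where "W = {t [^] z \<otimes> a | z a. z \<in> (UNIV::int set) \<and> a \<in> A'}"
    have A'c: "A' \<subseteq> carrier G" using A'D Dc by blast
    have tzD: "t [^] (z::int) \<in> D" for z using subgroup_int_pow_closed[OF D tD] .
    have Wsg: "subgroup W G"
    proof (rule subgroupI)
      show "W \<subseteq> carrier G" using A'c tc by (auto simp: W_def)
      show "W \<noteq> {}" using subgroup.one_closed[OF A'sg] by (auto simp: W_def)
    next
      fix x assume "x \<in> W"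
      then obtain z a where za: "x = t [^] (z::int) \<otimes> a" "a \<in> A'" unfolding W_def by blast
      have ac: "a \<in> carrier G" using za A'c by blast
      have "inv x = t [^] (-z) \<otimes> (t [^] z \<otimes> inv a \<otimes> inv (t [^] z))"
        using za ac tc by (simp add: int_pow_neg inv_mult_group m_assoc)
      moreover have "t [^] z \<otimes> inv a \<otimes> inv (t [^] z) \<in> A'"
        using conjD[OF tzD] subgroup.m_inv_closed[OF A'sg za(2)] by blast
      ultimately show "inv x \<in> W" by (auto simp: W_def)
    next
      fix x y assume "x \<in> W" "y \<in> W"
      then obtain z a w b where za: "x = t [^] (z::int) \<otimes> a" "a \<in> A'" "y = t [^] (w::int) \<otimes> b" "b \<in> A'"
        unfolding W_def by blast
      have ac: "a \<in> carrier G" "b \<in> carrier G" using za A'c by auto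
      have "x \<otimes> y = t [^] (z + w) \<otimes> ((inv (t [^] w) \<otimes> a \<otimes> inv (inv (t [^] w))) \<otimes> b)"
        using za ac tc by (simp add: int_pow_mult m_assoc)
      moreover have "inv (t [^] w) \<otimes> a \<otimes> inv (inv (t [^] w)) \<in> A'"
        using conjD[OF subgroup.m_inv_closed[OF D tzD] za(2)] .
      ultimately show "x \<otimes> y \<in> W" using subgroup.m_closed[OF A'sg _ za(4)] by (auto simp: W_def)
    qed
    have "insert t (T \<union> B) \<subseteq> W"
    proof
      fix x assume x: "x \<in> insert t (T \<union> B)"
      show "x \<in> W"
      proof (cases "x = t")
        case True
        hence "x = t [^] (1::int) \<otimes> \<one>" using tc by simp
        thus ?thesis using subgroup.one_closed[OF A'sg] unfolding W_def by blast
      next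
        case False
        hence "x \<in> A'" using x generate.incl[of x "T \<union> B" G] unfolding A'_def by blast
        moreover have "x = t [^] (0::int) \<otimes> x" using calculation A'c by auto
        ultimately show ?thesis unfolding W_def by blast
      qed
    qed
    hence AW: "A \<subseteq> W" unfolding A_def by (rule generate_subgroup_incl[OF _ Wsg])
    fix x assume "x \<in> A"
    thus "\<exists>z::int. \<exists>a\<in>A'. x = t [^] z \<otimes> a" using AW unfolding W_def by blast
  qed
  have acc2: "accg G A' B" using insert unfolding A'_def by blast
  have "accg G A B"
    by (rule accg_ext[OF Asg A'sg BA' A'A _ acc1 acc2]) (use conjD AD in blast)
  thus ?case unfolding A_def by simp
qed

definition cmt where "cmt x y = x \<otimes> y \<otimes> inv x \<otimes> inv y"

lemma cmt_closed [simp]: "x \<in> carrier G \<Longrightarrow> y \<in> carrier G \<Longrightarrow> cmt x y \<in> carrier G"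
  by (simp add: cmt_def)

lemma comm_subgroup_cmt: "comm_subgroup G H = generate G {cmt x y | x y. x \<in> carrier G \<and> y \<in> H}"
  by (simp add: comm_subgroup_def cmt_def)

lemma cmt_conj: "q \<in> carrier G \<Longrightarrow> x \<in> carrier G \<Longrightarrow> y \<in> carrier G \<Longrightarrow>
   q \<otimes> cmt x y \<otimes> inv q = cmt (q \<otimes> x \<otimes> inv q) (q \<otimes> y \<otimes> inv q)"
  by (simp add: cmt_def m_assoc inv_mult_group)

lemma cmt_mult_r: "x \<in> carrier G \<Longrightarrow> y \<in> carrier G \<Longrightarrow> z \<in> carrier G \<Longrightarrow>
   cmt x (y \<otimes> z) = cmt x y \<otimes> (y \<otimes> cmt x z \<otimes> inv y)"
  by (simp add: cmt_def m_assoc inv_mult_group)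

lemma cmt_inv_r: "x \<in> carrier G \<Longrightarrow> y \<in> carrier G \<Longrightarrow>
   cmt x (inv y) = inv y \<otimes> inv (cmt x y) \<otimes> inv (inv y)"
  by (simp add: cmt_def m_assoc inv_mult_group)

lemma cmt_mult_l: "x \<in> carrier G \<Longrightarrow> y \<in> carrier G \<Longrightarrow> z \<in> carrier G \<Longrightarrow>
   cmt (x \<otimes> y) z = (x \<otimes> cmt y z \<otimes> inv x) \<otimes> cmt x z"
  by (simp add: cmt_def m_assoc inv_mult_group)

lemma cmt_inv_l: "x \<in> carrier G \<Longrightarrow> y \<in> carrier G \<Longrightarrow>
   cmt (inv x) y = inv x \<otimes> inv (cmt x y) \<otimes> inv (inv x)"
  by (simp add: cmt_def m_assoc inv_mult_group)

lemma cmt_one_l [simp]: "y \<in> carrier G \<Longrightarrow> cmt \<one> y = \<one>"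
  by (simp add: cmt_def)

lemma conj_as_cmt: "q \<in> carrier G \<Longrightarrow> c \<in> carrier G \<Longrightarrow> q \<otimes> c \<otimes> inv q = cmt q c \<otimes> c"
  by (simp add: cmt_def m_assoc)

lemma normal_generateI':
  assumes "H \<subseteq> carrier G" and "\<And>h g. \<lbrakk> h \<in> H; g \<in> carrier G \<rbrakk> \<Longrightarrow> g \<otimes> h \<otimes> (inv g) \<in> generate G H"
  shows "generate G H \<lhd> G"
proof (rule normal_invI[OF generate_is_subgroup[OF assms(1)]])
  fix g h assume g: "g \<in> carrier G" show "h \<in> generate G H \<Longrightarrow> g \<otimes> h \<otimes> (inv g) \<in> generate G H"
  proof (induct h rule: generate.induct)
    case one thus ?case
      using g generate.one by auto
  next
    case incl show ?case
      using assms(2)[OF incl g] .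
  next
    case (inv h)
    hence h: "h \<in> carrier G"
      using assms(1) by auto
    hence "inv (g \<otimes> h \<otimes> (inv g)) = g \<otimes> (inv h) \<otimes> (inv g)"
      using g by (simp add: inv_mult_group m_assoc)
    thus ?case
      using generate_m_inv_closed[OF assms(1) assms(2)[OF inv g]] by simp
  next
    case (eng h1 h2)
    note in_carrier = eng(1,3)[THEN generate_in_carrier[OF assms(1)]]
    have "g \<otimes> (h1 \<otimes> h2) \<otimes> inv g = (g \<otimes> h1 \<otimes> inv g) \<otimes> (g \<otimes> h2 \<otimes> inv g)"
      using in_carrier g by (simp add: inv_solve_left m_assoc)
    thus ?case
      using generate.eng[OF eng(2,4)] by simp
  qed
qed

lemma cmt_set_sub: "H \<subseteq> carrier G \<Longrightarrow> {cmt x y | x y. x \<in> carrier G \<and> y \<in> H} \<subseteq> carrier G"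
  by auto

lemma comm_subgroup_sg: "H \<subseteq> carrier G \<Longrightarrow> subgroup (comm_subgroup G H) G"
  unfolding comm_subgroup_cmt by (rule generate_is_subgroup) auto

lemma cmt_in_comm: "x \<in> carrier G \<Longrightarrow> y \<in> H \<Longrightarrow> cmt x y \<in> comm_subgroup G H"
  unfolding comm_subgroup_cmt by (rule generate.incl) blast

lemma comm_subgroup_normal:
  assumes "H \<lhd> G" shows "comm_subgroup G H \<lhd> G"
proof -
  have Hc: "H \<subseteq> carrier G" using assms normal_imp_subgroup subgroup.subset by blast
  show ?thesis unfolding comm_subgroup_cmt
  proof (rule normal_generateI)
    show "{cmt x y | x y. x \<in> carrier G \<and> y \<in> H} \<subseteq> carrier G" using Hc by auto
  next
    fix h g assume h: "h \<in> {cmt x y | x y. x \<in> carrier G \<and> y \<in> H}" and g: "g \<in> carrier G"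
    then obtain x y where xy: "h = cmt x y" "x \<in> carrier G" "y \<in> H" by blast
    have "g \<otimes> y \<otimes> inv g \<in> H" using assms g xy normal_inv_iff by blast
    moreover have "g \<otimes> h \<otimes> inv g = cmt (g \<otimes> x \<otimes> inv g) (g \<otimes> y \<otimes> inv g)"
      using xy g Hc cmt_conj by blast
    ultimately show "g \<otimes> h \<otimes> inv g \<in> {cmt x y | x y. x \<in> carrier G \<and> y \<in> H}"
      using g xy by blast
  qed
qed

lemma comm_subgroup_le:
  assumes "H \<lhd> G" shows "comm_subgroup G H \<subseteq> H"
proof -
  have Hsg: "subgroup H G" using assms normal_imp_subgroup by blast
  have Hc: "H \<subseteq> carrier G" using Hsg subgroup.subset by blast
  show ?thesis unfolding comm_subgroup_cmt
  proof (rule generate_subgroup_incl[OF _ Hsg])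
    show "{cmt x y | x y. x \<in> carrier G \<and> y \<in> H} \<subseteq> H"
    proof
      fix h assume "h \<in> {cmt x y | x y. x \<in> carrier G \<and> y \<in> H}"
      then obtain x y where xy: "h = cmt x y" "x \<in> carrier G" "y \<in> H" by blast
      have yc: "y \<in> carrier G" using xy Hc by blast
      have "h = (x \<otimes> y \<otimes> inv x) \<otimes> inv y" using xy by (simp add: cmt_def)
      moreover have "x \<otimes> y \<otimes> inv x \<in> H" using assms xy normal_inv_iff by blast
      ultimately show "h \<in> H" using xy subgroup.m_closed[OF Hsg] subgroup.m_inv_closed[OF Hsg] by metis
    qed
  qed
qed

lemma lcs_normal: "lcs G (Suc k) \<lhd> G"
proof (induction k)
  case 0 thus ?case using subgroup_self normal_inv_iff by (simp add: m_closed)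
next
  case (Suc k) thus ?case using comm_subgroup_normal by simp
qed

lemma lcs_sg: "subgroup (lcs G (Suc k)) G"
  using lcs_normal normal_imp_subgroup by blast

lemma lcs_carrier: "lcs G (Suc k) \<subseteq> carrier G"
  using lcs_sg subgroup.subset by blast

lemma lcs_step: "lcs G (Suc (Suc k)) \<subseteq> lcs G (Suc k)"
  using comm_subgroup_le[OF lcs_normal] by simp

lemma lcs_antimono: "i \<le> j \<Longrightarrow> lcs G (Suc j) \<subseteq> lcs G (Suc i)"
proof (induction j)
  case 0 thus ?case by simp
next
  case (Suc j) thus ?case using lcs_step[of j] by (metis le_Suc_eq order_trans order_refl)
qed

lemma cmt_lcs: "x \<in> carrier G \<Longrightarrow> y \<in> lcs G (Suc k) \<Longrightarrow> cmt x y \<in> lcs G (Suc (Suc k))"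
  using cmt_in_comm by simp

lemma cmt_one_r [simp]: "x \<in> carrier G \<Longrightarrow> cmt x \<one> = \<one>"
  by (simp add: cmt_def)

lemma lcs_fg_factor:
  assumes Sc: "S \<subseteq> carrier G" and Sf: "finite S" and Sg: "generate G S = carrier G"
  shows "\<exists>T. finite T \<and> T \<subseteq> lcs G (Suc k) \<and> lcs G (Suc k) = generate G (T \<union> lcs G (Suc (Suc k)))"
proof (induction k)
  case 0
  have "generate G S \<subseteq> generate G (S \<union> lcs G (Suc (Suc 0)))" by (rule mono_generate) blast
  moreover have "generate G (S \<union> lcs G (Suc (Suc 0))) \<subseteq> carrier G"
    using Sc lcs_carrier[of "Suc 0"] by (intro generate_incl) blast
  ultimately show ?case using Sf Sc Sg by (intro exI[of _ S]) auto
next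
  case (Suc k)
  define g1 where "g1 = lcs G (Suc k)"
  define g2 where "g2 = lcs G (Suc (Suc k))"
  define g3 where "g3 = lcs G (Suc (Suc (Suc k)))"
  obtain T where T: "finite T" "T \<subseteq> g1" "g1 = generate G (T \<union> g2)" using Suc g1_def g2_def by blast
  have g1c: "g1 \<subseteq> carrier G" "g2 \<subseteq> carrier G" "g3 \<subseteq> carrier G" using lcs_carrier g1_def g2_def g3_def by blast+
  define C where "C = (\<lambda>(s,t). cmt s t) ` (S \<times> T)"
  have Cf: "finite C" using Sf T(1) C_def by simp
  have Cg2: "C \<subseteq> g2"
  proof
    fix c assume "c \<in> C"
    then obtain s t where st: "c = cmt s t" "s \<in> S" "t \<in> T" unfolding C_def by auto
    have "t \<in> lcs G (Suc k)" using st T(2) g1_def by blast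
    thus "c \<in> g2" using cmt_lcs[of s t k] st Sc g2_def by blast
  qed
  have g32: "g3 \<subseteq> g2" unfolding g2_def g3_def by (rule lcs_step)
  define M where "M = generate G (C \<union> g3)"
  have Cc: "C \<union> g3 \<subseteq> carrier G" using Cg2 g1c by blast
  have Msg: "subgroup M G" unfolding M_def using Cc by (rule generate_is_subgroup)
  have Mn: "M \<lhd> G" unfolding M_def
  proof (rule normal_generateI'[OF Cc])
    fix h q assume h: "h \<in> C \<union> g3" and q: "q \<in> carrier G"
    show "q \<otimes> h \<otimes> inv q \<in> generate G (C \<union> g3)"
    proof (cases "h \<in> g3")
      case True
      hence "q \<otimes> h \<otimes> inv q \<in> g3" using q lcs_normal normal_inv_iff g3_def by blast
      thus ?thesis using generate.incl[of _ "C \<union> g3" G] by blast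
    next
      case False
      hence hC: "h \<in> C" using h by blast
      hence hg2: "h \<in> g2" using Cg2 by blast
      have hc: "h \<in> carrier G" using hg2 g1c by blast
      have "cmt q h \<in> g3" using cmt_lcs[OF q, of h "Suc k"] hg2 g2_def g3_def by simp
      hence "cmt q h \<in> generate G (C \<union> g3)" "h \<in> generate G (C \<union> g3)"
        using hC generate.incl[of _ "C \<union> g3" G] by blast+
      thus ?thesis using conj_as_cmt[OF q hc] generate.eng by metis
    qed
  qed
  have conjM: "q \<otimes> m \<otimes> inv q \<in> M" if "q \<in> carrier G" "m \<in> M" for q m
    using Mn that normal_inv_iff by blast
  have Mc: "M \<subseteq> carrier G" using Msg subgroup.subset by blast
  have g3M: "g3 \<subseteq> M" unfolding M_def using generate.incl[of _ "C \<union> g3" G] by blast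
  have CM: "C \<subseteq> M" unfolding M_def using generate.incl[of _ "C \<union> g3" G] by blast
  have stepa: "cmt s y \<in> M" if s: "s \<in> S" and y: "y \<in> g1" for s y
  proof -
    have sc: "s \<in> carrier G" using s Sc by blast
    define Y where "Y = {y \<in> carrier G. cmt s y \<in> M}"
    have Ysg: "subgroup Y G"
    proof (rule subgroupI)
      show "Y \<subseteq> carrier G" by (auto simp: Y_def)
      show "Y \<noteq> {}" using sc subgroup.one_closed[OF Msg] unfolding Y_def by (metis (mono_tags, lifting) cmt_one_r cmt_one_l one_closed mem_Collect_eq empty_iff)
    next
      fix a assume "a \<in> Y"
      hence a: "a \<in> carrier G" "cmt s a \<in> M" by (auto simp: Y_def)
      have "cmt s (inv a) \<in> M"
        using cmt_inv_r[OF sc a(1)] conjM[of "inv a" "inv (cmt s a)"] subgroup.m_inv_closed[OF Msg a(2)] a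
        by simp
      thus "inv a \<in> Y" using a by (simp add: Y_def)
    next
      fix a b assume "a \<in> Y" "b \<in> Y"
      hence a: "a \<in> carrier G" "cmt s a \<in> M" "b \<in> carrier G" "cmt s b \<in> M" by (auto simp: Y_def)
      have "cmt s (a \<otimes> b) \<in> M"
        using cmt_mult_r[OF sc a(1) a(3)] conjM[OF a(1) a(4)] subgroup.m_closed[OF Msg a(2)] by simp
      thus "a \<otimes> b \<in> Y" using a by (simp add: Y_def)
    qed
    have "T \<union> g2 \<subseteq> Y"
    proof
      fix t assume t: "t \<in> T \<union> g2"
      show "t \<in> Y"
      proof (cases "t \<in> T")
        case True
        hence "cmt s t \<in> C" using s unfolding C_def by force
        thus ?thesis using CM True T(2) g1c unfolding Y_def by blast
      next
        case False
        hence "t \<in> g2" using t by blast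
        hence "cmt s t \<in> g3" using cmt_lcs[OF sc, of t "Suc k"] g2_def g3_def by simp
        thus ?thesis using g3M \<open>t \<in> g2\<close> g1c unfolding Y_def by blast
      qed
    qed
    hence "g1 \<subseteq> Y" using T(3) generate_subgroup_incl[OF _ Ysg] by simp
    thus ?thesis using y Y_def by blast
  qed
  have stepb: "cmt x y \<in> M" if x: "x \<in> carrier G" and y: "y \<in> g1" for x y
  proof -
    have yc: "y \<in> carrier G" using y g1c by blast
    define XX where "XX = {x \<in> carrier G. cmt x y \<in> M}"
    have Xsg: "subgroup XX G"
    proof (rule subgroupI)
      show "XX \<subseteq> carrier G" by (auto simp: XX_def)
      show "XX \<noteq> {}" using yc subgroup.one_closed[OF Msg] unfolding XX_def by (metis (mono_tags, lifting) cmt_one_r cmt_one_l one_closed mem_Collect_eq empty_iff)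
    next
      fix a assume "a \<in> XX"
      hence a: "a \<in> carrier G" "cmt a y \<in> M" by (auto simp: XX_def)
      have "cmt (inv a) y \<in> M"
        using cmt_inv_l[OF a(1) yc] conjM[of "inv a" "inv (cmt a y)"] subgroup.m_inv_closed[OF Msg a(2)] a
        by simp
      thus "inv a \<in> XX" using a by (simp add: XX_def)
    next
      fix a b assume "a \<in> XX" "b \<in> XX"
      hence a: "a \<in> carrier G" "cmt a y \<in> M" "b \<in> carrier G" "cmt b y \<in> M" by (auto simp: XX_def)
      have "cmt (a \<otimes> b) y \<in> M"
        using cmt_mult_l[OF a(1) a(3) yc] conjM[OF a(1) a(4)] subgroup.m_closed[OF Msg _ a(2)] by simp
      thus "a \<otimes> b \<in> XX" using a by (simp add: XX_def)
    qed
    have "S \<subseteq> XX" using stepa y Sc unfolding XX_def by blast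
    hence "carrier G \<subseteq> XX" using Sg generate_subgroup_incl[OF _ Xsg] by metis
    thus ?thesis using x XX_def by blast
  qed
  have "g2 \<subseteq> M"
  proof -
    have "g2 = comm_subgroup G g1" unfolding g1_def g2_def by simp
    also have "\<dots> \<subseteq> M" unfolding comm_subgroup_cmt using stepb
      by (intro generate_subgroup_incl[OF _ Msg]) blast
    finally show ?thesis .
  qed
  moreover have "M \<subseteq> g2" unfolding M_def using Cg2 g32 lcs_sg[of "Suc k"] unfolding g2_def
    by (intro generate_subgroup_incl) auto
  ultimately have "g2 = generate G (C \<union> g3)" unfolding M_def by blast
  thus ?case using Cf Cg2 g2_def g3_def by blast
qed

lemma noeth_lcs:
  assumes Sc: "S \<subseteq> carrier G" and Sf: "finite S" and Sg: "generate G S = carrier G"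
  shows "accg G (carrier G) (lcs G (Suc k))"
proof (induction k)
  case 0 thus ?case using accg_refl by simp
next
  case (Suc k)
  obtain T where T: "finite T" "T \<subseteq> lcs G (Suc k)" "lcs G (Suc k) = generate G (T \<union> lcs G (Suc (Suc k)))"
    using lcs_fg_factor[OF Sc Sf Sg] by blast
  have acc2: "accg G (lcs G (Suc k)) (lcs G (Suc (Suc k)))"
  proof -
    have "accg G (generate G (T \<union> lcs G (Suc (Suc k)))) (lcs G (Suc (Suc k)))"
    proof (rule accg_fgab[OF lcs_sg lcs_normal lcs_step _ T(1) T(2)])
      fix x y assume "x \<in> lcs G (Suc k)" "y \<in> lcs G (Suc k)"
      moreover hence "x \<in> carrier G" using lcs_carrier by blast
      ultimately show "x \<otimes> y \<otimes> inv x \<otimes> inv y \<in> lcs G (Suc (Suc k))"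
        using cmt_lcs unfolding cmt_def by blast
    qed
    thus ?thesis by (simp only: T(3)[symmetric])
  qed
  show ?case
  proof (rule accg_ext[OF subgroup_self lcs_sg lcs_step lcs_carrier _ Suc acc2])
    fix a c assume "a \<in> carrier G" "c \<in> lcs G (Suc k)"
    thus "a \<otimes> c \<otimes> inv a \<in> lcs G (Suc k)" using lcs_normal normal_inv_iff by blast
  qed
qed

lemma hopf:
  assumes Sc: "S \<subseteq> carrier G" and Sf: "finite S" and Sg: "generate G S = carrier G"
    and triv: "lcs G (Suc k) = {\<one>}"
    and g: "g \<in> hom G G" and gs: "g ` carrier G = carrier G"
  shows "inj_on g (carrier G)"
proof -
  have hn: "(g ^^ n) \<in> hom G G" for n
  proof (induction n)
    case 0 thus ?case by (simp add: hom_def)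
  next
    case (Suc n) thus ?case using Group.hom_compose[OF Suc g] by (simp add: comp_def)
  qed
  have sn: "(g ^^ n) ` carrier G = carrier G" for n
  proof (induction n)
    case 0 thus ?case by simp
  next
    case (Suc n) thus ?case using gs by (metis funpow.simps(2) image_comp)
  qed
  have gh: "group_hom G G (g ^^ n)" for n
    using hn by (simp add: group_hom_def group_hom_axioms_def is_group)
  define K where "K n = kernel G G (g ^^ n)" for n
  have Ksg: "subgroup (K n) G" for n unfolding K_def using group_hom.subgroup_kernel[OF gh] .
  have K1: "{\<one>} \<subseteq> K n" for n using Ksg subgroup.one_closed by blast
  have Kc: "K n \<subseteq> carrier G" for n using Ksg subgroup.subset by blast
  have g1: "g \<one> = \<one>" using group_hom.hom_one[OF gh[of 1]] by simp
  have Kup: "K n \<subseteq> K (Suc n)" for n using g1 by (auto simp: K_def kernel_def)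
  have acc: "accg G (carrier G) {\<one>}" using noeth_lcs[OF Sc Sf Sg, of k] triv by simp
  obtain m where m: "\<forall>n\<ge>m. K n = K m" using accgD[of "carrier G" "{\<one>}" K, OF acc Ksg K1 Kc Kup] by blast
  have "x = \<one>" if x: "x \<in> carrier G" "g x = \<one>" for x
  proof -
    obtain y where y: "y \<in> carrier G" "x = (g ^^ m) y" using sn[of m] x by (metis imageE)
    have "(g ^^ Suc m) y = \<one>" using x y by simp
    hence "y \<in> K (Suc m)" using y by (simp add: K_def kernel_def)
    moreover have "K (Suc m) = K m" using m le_Suc_eq[of m m] by blast
    ultimately have "y \<in> K m" by simp
    thus ?thesis using y by (simp add: K_def kernel_def)
  qed
  thus ?thesis using group_hom.inj_on_one_iff[OF gh[of 1]] by simp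
qed

end



lemma lcs_img_Suc:
  assumes G: "group G" and H: "group H" and h: "h \<in> hom G H" and hs: "h ` carrier G = carrier H"
  shows "h ` lcs G (Suc k) = lcs H (Suc k)"
proof (induction k)
  case 0 thus ?case using hs by simp
next
  case (Suc k)
  have gh: "group_hom G H h" using G H h by (simp add: group_hom_def group_hom_axioms_def)
  let ?C = "{x \<otimes>\<^bsub>G\<^esub> y \<otimes>\<^bsub>G\<^esub> inv\<^bsub>G\<^esub> x \<otimes>\<^bsub>G\<^esub> inv\<^bsub>G\<^esub> y | x y. x \<in> carrier G \<and> y \<in> lcs G (Suc k)}"
  let ?C' = "{x \<otimes>\<^bsub>H\<^esub> y \<otimes>\<^bsub>H\<^esub> inv\<^bsub>H\<^esub> x \<otimes>\<^bsub>H\<^esub> inv\<^bsub>H\<^esub> y | x y. x \<in> carrier H \<and> y \<in> lcs H (Suc k)}"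
  have Lc: "lcs G (Suc k) \<subseteq> carrier G" using group.lcs_carrier[OF G] .
  have Cc: "?C \<subseteq> carrier G" using Lc G by (auto intro!: monoid.m_closed group.is_monoid group.inv_closed)
  have img: "h ` ?C = ?C'"
  proof
    show "h ` ?C \<subseteq> ?C'"
    proof
      fix z assume "z \<in> h ` ?C"
      then obtain x y where xy: "z = h (x \<otimes>\<^bsub>G\<^esub> y \<otimes>\<^bsub>G\<^esub> inv\<^bsub>G\<^esub> x \<otimes>\<^bsub>G\<^esub> inv\<^bsub>G\<^esub> y)" "x \<in> carrier G" "y \<in> lcs G (Suc k)"
        by blast
      have yc: "y \<in> carrier G" using xy Lc by blast
      have "z = h x \<otimes>\<^bsub>H\<^esub> h y \<otimes>\<^bsub>H\<^esub> inv\<^bsub>H\<^esub> h x \<otimes>\<^bsub>H\<^esub> inv\<^bsub>H\<^esub> h y"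
        using xy yc by (simp add: group_hom.hom_mult[OF gh] group_hom.hom_inv[OF gh] group.inv_closed[OF G] monoid.m_closed[OF group.is_monoid[OF G]])
      moreover have "h x \<in> carrier H" "h y \<in> lcs H (Suc k)" using xy hs Suc by auto
      ultimately show "z \<in> ?C'" by blast
    qed
  next
    show "?C' \<subseteq> h ` ?C"
    proof
      fix z assume "z \<in> ?C'"
      then obtain x' y' where xy: "z = x' \<otimes>\<^bsub>H\<^esub> y' \<otimes>\<^bsub>H\<^esub> inv\<^bsub>H\<^esub> x' \<otimes>\<^bsub>H\<^esub> inv\<^bsub>H\<^esub> y'" "x' \<in> carrier H" "y' \<in> lcs H (Suc k)"
        by blast
      obtain x where x: "x \<in> carrier G" "x' = h x" using xy hs by auto
      obtain y where y: "y \<in> lcs G (Suc k)" "y' = h y" using xy Suc by auto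
      have yc: "y \<in> carrier G" using y Lc by blast
      have "z = h (x \<otimes>\<^bsub>G\<^esub> y \<otimes>\<^bsub>G\<^esub> inv\<^bsub>G\<^esub> x \<otimes>\<^bsub>G\<^esub> inv\<^bsub>G\<^esub> y)"
        using xy x y yc by (simp add: group_hom.hom_mult[OF gh] group_hom.hom_inv[OF gh] group.inv_closed[OF G] monoid.m_closed[OF group.is_monoid[OF G]])
      thus "z \<in> h ` ?C" using x y by blast
    qed
  qed
  have "h ` lcs G (Suc (Suc k)) = h ` generate G ?C" by (simp add: comm_subgroup_def)
  also have "\<dots> = generate H (h ` ?C)" using group_hom.generate_img[OF gh Cc] by simp
  also have "\<dots> = lcs H (Suc (Suc k))" using img by (simp add: comm_subgroup_def)
  finally show ?case .
qed

lemma factor_hom: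
  assumes F: "group F" and H: "group H" and H': "group H'"
    and a: "\<alpha> \<in> hom F H" and as: "\<alpha> ` carrier F = carrier H" and b: "\<beta> \<in> hom F H'"
    and ker: "\<And>x. x \<in> carrier F \<Longrightarrow> \<alpha> x = \<one>\<^bsub>H\<^esub> \<Longrightarrow> \<beta> x = \<one>\<^bsub>H'\<^esub>"
  shows "\<exists>f \<in> hom H H'. \<forall>x\<in>carrier F. f (\<alpha> x) = \<beta> x"
proof -
  have ga: "group_hom F H \<alpha>" using F H a by (simp add: group_hom_def group_hom_axioms_def)
  have gb: "group_hom F H' \<beta>" using F H' b by (simp add: group_hom_def group_hom_axioms_def)
  define f where "f h = \<beta> (SOME x. x \<in> carrier F \<and> \<alpha> x = h)" for h
  have fa: "f (\<alpha> x) = \<beta> x" if x: "x \<in> carrier F" for x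
  proof -
    define x' where "x' = (SOME y. y \<in> carrier F \<and> \<alpha> y = \<alpha> x)"
    have x': "x' \<in> carrier F" "\<alpha> x' = \<alpha> x" unfolding x'_def by (rule someI2[of _ x]; use x in auto)+
    have "\<alpha> (x' \<otimes>\<^bsub>F\<^esub> inv\<^bsub>F\<^esub> x) = \<one>\<^bsub>H\<^esub>"
      using x x' by (simp add: group_hom.hom_mult[OF ga] group_hom.hom_inv[OF ga] group.inv_closed[OF F]
          group.r_inv[OF H] hom_in_carrier[OF a])
    hence "\<beta> (x' \<otimes>\<^bsub>F\<^esub> inv\<^bsub>F\<^esub> x) = \<one>\<^bsub>H'\<^esub>" using ker x x' by (simp add: group.inv_closed[OF F] monoid.m_closed[OF group.is_monoid[OF F]])
    hence "\<beta> x' \<otimes>\<^bsub>H'\<^esub> inv\<^bsub>H'\<^esub> \<beta> x = \<one>\<^bsub>H'\<^esub>"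
      using x x' by (simp add: group_hom.hom_mult[OF gb] group_hom.hom_inv[OF gb] group.inv_closed[OF F])
    hence "\<beta> x' = \<beta> x" using x x' hom_in_carrier[OF b] by (metis group.inv_equality group.inv_inv H' group.inv_closed)
    thus ?thesis unfolding f_def x'_def[symmetric] .
  qed
  have "f \<in> hom H H'"
  proof (rule homI)
    fix h assume "h \<in> carrier H"
    then obtain x where "x \<in> carrier F" "h = \<alpha> x" using as by auto
    thus "f h \<in> carrier H'" using fa hom_in_carrier[OF b] by simp
  next
    fix h1 h2 assume "h1 \<in> carrier H" "h2 \<in> carrier H"
    then obtain x1 x2 where x: "x1 \<in> carrier F" "h1 = \<alpha> x1" "x2 \<in> carrier F" "h2 = \<alpha> x2" using as by blast
    have "f (h1 \<otimes>\<^bsub>H\<^esub> h2) = f (\<alpha> (x1 \<otimes>\<^bsub>F\<^esub> x2))" using x by (simp add: group_hom.hom_mult[OF ga])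
    also have "\<dots> = \<beta> (x1 \<otimes>\<^bsub>F\<^esub> x2)" using x fa monoid.m_closed[OF group.is_monoid[OF F]] by simp
    also have "\<dots> = f h1 \<otimes>\<^bsub>H'\<^esub> f h2" using x fa by (simp add: group_hom.hom_mult[OF gb])
    finally show "f (h1 \<otimes>\<^bsub>H\<^esub> h2) = f h1 \<otimes>\<^bsub>H'\<^esub> f h2" .
  qed
  thus ?thesis using fa by blast
qed

lemma key_lemma:
  assumes H: "group H" and H': "group H'"
    and Sc: "S \<subseteq> carrier H" and Sf: "finite S" and Sg: "generate H S = carrier H"
    and f: "f \<in> hom H H'" and fs: "f ` carrier H = carrier H'"
    and iso: "H Mod lcs H (Suc k) \<cong> H' Mod lcs H' (Suc k)"
    and h: "h \<in> carrier H" and fh: "f h = \<one>\<^bsub>H'\<^esub>"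
  shows "h \<in> lcs H (Suc k)"
proof -
  define N where "N = lcs H (Suc k)"
  define N' where "N' = lcs H' (Suc k)"
  have Nn: "N \<lhd> H" unfolding N_def using group.lcs_normal[OF H] .
  have N'n: "N' \<lhd> H'" unfolding N'_def using group.lcs_normal[OF H'] .
  define Q where "Q = H Mod N"
  define Q' where "Q' = H' Mod N'"
  have Q: "group Q" unfolding Q_def using normal.factorgroup_is_group[OF Nn] .
  have Q': "group Q'" unfolding Q'_def using normal.factorgroup_is_group[OF N'n] .
  define \<pi> where "\<pi> = (\<lambda>a. N #>\<^bsub>H\<^esub> a)"
  define \<pi>' where "\<pi>' = (\<lambda>a. N' #>\<^bsub>H'\<^esub> a)"
  have \<pi>h: "\<pi> \<in> hom H Q" unfolding \<pi>_def Q_def using normal.r_coset_hom_Mod[OF Nn] .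
  have \<pi>'h: "\<pi>' \<in> hom H' Q'" unfolding \<pi>'_def Q'_def using normal.r_coset_hom_Mod[OF N'n] .
  have \<pi>s: "\<pi> ` carrier H = carrier Q" unfolding \<pi>_def Q_def by (simp add: carrier_FactGroup)
  have \<pi>'s: "\<pi>' ` carrier H' = carrier Q'" unfolding \<pi>'_def Q'_def by (simp add: carrier_FactGroup)
  have gp: "group_hom H Q \<pi>" using H Q \<pi>h by (simp add: group_hom_def group_hom_axioms_def)
  have gp': "group_hom H' Q' \<pi>'" using H' Q' \<pi>'h by (simp add: group_hom_def group_hom_axioms_def)
  have Nsg: "subgroup N H" using Nn normal_imp_subgroup by blast
  have N'sg: "subgroup N' H'" using N'n normal_imp_subgroup by blast
  have fN: "f ` N \<subseteq> N'" unfolding N_def N'_def using lcs_img_Suc[OF H H' f fs] by simp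
  have \<beta>h: "\<pi>' \<circ> f \<in> hom H Q'" using Group.hom_compose[OF f \<pi>'h] .
  obtain fk where fk: "fk \<in> hom Q Q'" "\<forall>x\<in>carrier H. fk (\<pi> x) = (\<pi>' \<circ> f) x"
  proof -
    have "\<exists>fk \<in> hom Q Q'. \<forall>x\<in>carrier H. fk (\<pi> x) = (\<pi>' \<circ> f) x"
    proof (rule factor_hom[OF H Q Q' \<pi>h \<pi>s \<beta>h])
      fix x assume x: "x \<in> carrier H" "\<pi> x = \<one>\<^bsub>Q\<^esub>"
      hence "N #>\<^bsub>H\<^esub> x = N" by (simp add: \<pi>_def Q_def)
      hence "x \<in> N" using group.coset_join1[OF H _ x(1) Nsg] by blast
      hence "f x \<in> N'" using fN by blast
      hence "N' #>\<^bsub>H'\<^esub> f x = N'" using group.coset_join2[OF H' _ N'sg] hom_in_carrier[OF f x(1)] by blast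
      thus "(\<pi>' \<circ> f) x = \<one>\<^bsub>Q'\<^esub>" by (simp add: \<pi>'_def Q'_def)
    qed
    thus ?thesis using that by blast
  qed
  have fks: "fk ` carrier Q = carrier Q'"
  proof -
    have "fk ` carrier Q = fk ` \<pi> ` carrier H" using \<pi>s by simp
    also have "\<dots> = \<pi>' ` f ` carrier H" using fk(2) by (force simp: image_iff)
    also have "\<dots> = carrier Q'" using fs \<pi>'s by simp
    finally show ?thesis .
  qed
  have "Q \<cong> Q'" using iso unfolding Q_def Q'_def N_def N'_def .
  hence "Q' \<cong> Q" using group.iso_sym[OF Q] by blast
  then obtain \<iota> where \<iota>: "\<iota> \<in> iso Q' Q" unfolding is_iso_def by blast
  have \<iota>h: "\<iota> \<in> hom Q' Q" and \<iota>s: "\<iota> ` carrier Q' = carrier Q" using \<iota> by (auto simp: iso_iff)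
  define g where "g = \<iota> \<circ> fk"
  have gh: "g \<in> hom Q Q" unfolding g_def using Group.hom_compose[OF fk(1) \<iota>h] .
  have gs: "g ` carrier Q = carrier Q" unfolding g_def using fks \<iota>s by (metis image_comp)
  have SQc: "\<pi> ` S \<subseteq> carrier Q" using Sc \<pi>s by blast
  have SQg: "generate Q (\<pi> ` S) = carrier Q"
    using group_hom.generate_img[OF gp Sc] Sg \<pi>s by simp
  have lcsQ: "lcs Q (Suc k) = {\<one>\<^bsub>Q\<^esub>}"
  proof -
    have "lcs Q (Suc k) = \<pi> ` N" unfolding N_def using lcs_img_Suc[OF H Q \<pi>h \<pi>s] by simp
    also have "\<dots> = {N}"
    proof -
      have "\<pi> x = N" if "x \<in> N" for x
        unfolding \<pi>_def using group.coset_join2[OF H _ Nsg that] Nsg subgroup.subset that by blast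
      moreover have "N \<noteq> {}" using subgroup.one_closed[OF Nsg] by blast
      ultimately show ?thesis by blast
    qed
    finally show ?thesis by (simp add: Q_def)
  qed
  have inj: "inj_on g (carrier Q)"
    using group.hopf[OF Q SQc finite_imageI[OF Sf] SQg lcsQ gh gs] .
  have gq: "group_hom Q Q g" using Q gh by (simp add: group_hom_def group_hom_axioms_def)
  have g\<iota>: "group_hom Q' Q \<iota>" using Q Q' \<iota>h by (simp add: group_hom_def group_hom_axioms_def)
  have "g (\<pi> h) = \<iota> (\<pi>' (f h))" using fk(2) h by (simp add: g_def)
  also have "\<dots> = \<one>\<^bsub>Q\<^esub>" using fh group_hom.hom_one[OF gp'] group_hom.hom_one[OF g\<iota>] by simp
  finally have "g (\<pi> h) = \<one>\<^bsub>Q\<^esub>" .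
  moreover have "\<pi> h \<in> carrier Q" using \<pi>h h by (rule hom_in_carrier)
  ultimately have "\<pi> h = \<one>\<^bsub>Q\<^esub>" using group_hom.inj_on_one_iff[OF gq] inj by blast
  hence "N #>\<^bsub>H\<^esub> h = N" by (simp add: \<pi>_def Q_def)
  thus ?thesis using group.coset_join1[OF H _ h Nsg] N_def by blast
qed

lemma quot_map:
  assumes F: "group F" and N: "N \<lhd> F" and G: "group G" and iso: "F Mod N \<cong> G"
  shows "\<exists>p \<in> hom F G. p ` carrier F = carrier G \<and> (\<forall>x\<in>carrier F. p x = \<one>\<^bsub>G\<^esub> \<longleftrightarrow> x \<in> N)"
proof -
  obtain \<iota> where \<iota>: "\<iota> \<in> iso (F Mod N) G" using iso unfolding is_iso_def by blast
  have Q: "group (F Mod N)" using normal.factorgroup_is_group[OF N] .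
  have \<iota>h: "\<iota> \<in> hom (F Mod N) G" and \<iota>s: "\<iota> ` carrier (F Mod N) = carrier G"
    and \<iota>i: "inj_on \<iota> (carrier (F Mod N))" using \<iota> by (auto simp: iso_iff)
  define \<pi> where "\<pi> = (\<lambda>a. N #>\<^bsub>F\<^esub> a)"
  have \<pi>h: "\<pi> \<in> hom F (F Mod N)" unfolding \<pi>_def using normal.r_coset_hom_Mod[OF N] .
  have \<pi>s: "\<pi> ` carrier F = carrier (F Mod N)" unfolding \<pi>_def by (simp add: carrier_FactGroup)
  have Nsg: "subgroup N F" using N normal_imp_subgroup by blast
  have g\<iota>: "group_hom (F Mod N) G \<iota>" using Q G \<iota>h by (simp add: group_hom_def group_hom_axioms_def)
  have "\<iota> \<circ> \<pi> \<in> hom F G" using Group.hom_compose[OF \<pi>h \<iota>h] .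
  moreover have "(\<iota> \<circ> \<pi>) ` carrier F = carrier G" using \<pi>s \<iota>s by (metis image_comp)
  moreover have "(\<iota> \<circ> \<pi>) x = \<one>\<^bsub>G\<^esub> \<longleftrightarrow> x \<in> N" if x: "x \<in> carrier F" for x
  proof -
    have px: "\<pi> x \<in> carrier (F Mod N)" using \<pi>h x by (rule hom_in_carrier)
    have "(\<iota> \<circ> \<pi>) x = \<one>\<^bsub>G\<^esub> \<longleftrightarrow> \<pi> x = \<one>\<^bsub>F Mod N\<^esub>"
      using group_hom.inj_on_one_iff[OF g\<iota>] \<iota>i px group_hom.hom_one[OF g\<iota>] by auto
    also have "\<dots> \<longleftrightarrow> x \<in> N"
      using group.coset_join1[OF F _ x Nsg] group.coset_join2[OF F x Nsg] by (auto simp: \<pi>_def)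
    finally show ?thesis .
  qed
  ultimately show ?thesis by blast
qed

lemma lcs_inter_one:
  assumes "residually_nilpotent G" and "\<And>k. h \<in> lcs G (Suc k)"
  shows "h = \<one>\<^bsub>G\<^esub>"
proof -
  have "h \<in> (\<Inter>k\<in>{1..}. lcs G k)"
  proof (rule INT_I)
    fix k :: nat assume "k \<in> {1..}"
    then obtain j where "k = Suc j" by (cases k) auto
    thus "h \<in> lcs G k" using assms(2) by simp
  qed
  thus ?thesis using assms(1) unfolding residually_nilpotent_def by blast
qed



theorem mainTheorem3:
  fixes \<Gamma> :: "'g monoid" and F :: "'a monoid" and G :: "'h monoid"
    and K N :: "'a set"
  assumes "group \<Gamma>" "finitely_generated \<Gamma>" "residually_nilpotent \<Gamma>"
    and "free_group_of_rank F (group_rank \<Gamma>)"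
    and "K \<lhd> F" "F Mod K \<cong> \<Gamma>"
    and "N \<lhd> F" "group G" "F Mod N \<cong> G"
    and "weakly_para \<Gamma> G"
  shows "((\<exists>\<phi>\<in>iso F F. K \<subseteq> \<phi> ` N) \<longrightarrow> G \<cong> \<Gamma>)
       \<and> ((\<exists>\<phi>\<in>iso F F. \<phi> ` N \<subset> K) \<longrightarrow> \<not> residually_nilpotent G \<and> \<not> para \<Gamma> G)"
proof -
  note Gam = assms(1) and G = assms(8)
  have F: "group F" using assms(4) by (simp add: free_group_of_rank_def)
  obtain S0 where S0: "S0 \<subseteq> carrier F" "finite S0" "generate F S0 = carrier F"
    using assms(4) by (auto simp: free_group_of_rank_def free_basis_def)
  obtain SG where SG: "SG \<subseteq> carrier \<Gamma>" "finite SG" "generate \<Gamma> SG = carrier \<Gamma>"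
    using assms(2) by (auto simp: finitely_generated_def)
  obtain pK where pK: "pK \<in> hom F \<Gamma>" "pK ` carrier F = carrier \<Gamma>" "\<forall>x\<in>carrier F. pK x = \<one>\<^bsub>\<Gamma>\<^esub> \<longleftrightarrow> x \<in> K"
    using quot_map[OF F assms(5) Gam assms(6)] by blast
  obtain pN where pN: "pN \<in> hom F G" "pN ` carrier F = carrier G" "\<forall>x\<in>carrier F. pN x = \<one>\<^bsub>G\<^esub> \<longleftrightarrow> x \<in> N"
    using quot_map[OF F assms(7) G assms(9)] by blast
  have Nc: "N \<subseteq> carrier F" using assms(7) normal_imp_subgroup subgroup.subset by blast
  have Kc: "K \<subseteq> carrier F" using assms(5) normal_imp_subgroup subgroup.subset by blast
  have wp: "G Mod lcs G (Suc k) \<cong> \<Gamma> Mod lcs \<Gamma> (Suc k)" for k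
    using assms(10) unfolding weakly_para_def by simp
  have wp': "\<Gamma> Mod lcs \<Gamma> (Suc k) \<cong> G Mod lcs G (Suc k)" for k
    using group.iso_sym[OF normal.factorgroup_is_group[OF group.lcs_normal[OF G]] wp] .
  show ?thesis
  proof (intro conjI impI)
    assume "\<exists>\<phi>\<in>iso F F. K \<subseteq> \<phi> ` N"
    then obtain \<phi> where \<phi>: "\<phi> \<in> iso F F" "K \<subseteq> \<phi> ` N" by blast
    have \<phi>h: "\<phi> \<in> hom F F" and \<phi>s: "\<phi> ` carrier F = carrier F" and \<phi>i: "inj_on \<phi> (carrier F)"
      using \<phi>(1) by (auto simp: iso_iff)
    have ah: "pK \<circ> \<phi> \<in> hom F \<Gamma>" using Group.hom_compose[OF \<phi>h pK(1)] .
    have as: "(pK \<circ> \<phi>) ` carrier F = carrier \<Gamma>" using \<phi>s pK(2) by (metis image_comp)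
    obtain f where f: "f \<in> hom \<Gamma> G" "\<forall>x\<in>carrier F. f ((pK \<circ> \<phi>) x) = pN x"
    proof -
      have "\<exists>f \<in> hom \<Gamma> G. \<forall>x\<in>carrier F. f ((pK \<circ> \<phi>) x) = pN x"
      proof (rule factor_hom[OF F Gam G ah as pN(1)])
        fix x assume x: "x \<in> carrier F" "(pK \<circ> \<phi>) x = \<one>\<^bsub>\<Gamma>\<^esub>"
        have "\<phi> x \<in> K" using x pK(3) hom_in_carrier[OF \<phi>h x(1)] by simp
        then obtain n where n: "n \<in> N" "\<phi> x = \<phi> n" using \<phi>(2) by blast
        hence "x = n" using \<phi>i x(1) Nc by (meson inj_onD subsetD)
        thus "pN x = \<one>\<^bsub>G\<^esub>" using n pN(3) x by simp
      qed
      thus ?thesis using that by blast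
    qed
    have fs: "f ` carrier \<Gamma> = carrier G"
    proof -
      have "f ` carrier \<Gamma> = f ` (pK \<circ> \<phi>) ` carrier F" using as by simp
      also have "\<dots> = pN ` carrier F" using f(2) by (force simp: image_iff)
      finally show ?thesis using pN(2) by simp
    qed
    have gf: "group_hom \<Gamma> G f" using Gam G f(1) by (simp add: group_hom_def group_hom_axioms_def)
    have "\<forall>h\<in>carrier \<Gamma>. f h = \<one>\<^bsub>G\<^esub> \<longrightarrow> h = \<one>\<^bsub>\<Gamma>\<^esub>"
    proof (intro ballI impI)
      fix h assume h: "h \<in> carrier \<Gamma>" "f h = \<one>\<^bsub>G\<^esub>"
      have "\<And>k. h \<in> lcs \<Gamma> (Suc k)" using key_lemma[OF Gam G SG f(1) fs wp' h] .
      thus "h = \<one>\<^bsub>\<Gamma>\<^esub>" using lcs_inter_one[OF assms(3)] by blast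
    qed
    hence "f \<in> iso \<Gamma> G" using group_hom.iso_iff[OF gf] fs by blast
    hence "\<Gamma> \<cong> G" unfolding is_iso_def by blast
    thus "G \<cong> \<Gamma>" using group.iso_sym[OF Gam] by blast
  next
    assume "\<exists>\<phi>\<in>iso F F. \<phi> ` N \<subset> K"
    then obtain \<phi> where \<phi>: "\<phi> \<in> iso F F" "\<phi> ` N \<subset> K" by blast
    have \<phi>h: "\<phi> \<in> hom F F" and \<phi>s: "\<phi> ` carrier F = carrier F"
      using \<phi>(1) by (auto simp: iso_iff)
    have bh: "pK \<circ> \<phi> \<in> hom F \<Gamma>" using Group.hom_compose[OF \<phi>h pK(1)] .
    obtain f where f: "f \<in> hom G \<Gamma>" "\<forall>x\<in>carrier F. f (pN x) = (pK \<circ> \<phi>) x"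
    proof -
      have "\<exists>f \<in> hom G \<Gamma>. \<forall>x\<in>carrier F. f (pN x) = (pK \<circ> \<phi>) x"
      proof (rule factor_hom[OF F G Gam pN(1) pN(2) bh])
        fix x assume x: "x \<in> carrier F" "pN x = \<one>\<^bsub>G\<^esub>"
        hence "x \<in> N" using pN(3) by blast
        hence "\<phi> x \<in> K" using \<phi>(2) by blast
        thus "(pK \<circ> \<phi>) x = \<one>\<^bsub>\<Gamma>\<^esub>" using pK(3) hom_in_carrier[OF \<phi>h x(1)] by simp
      qed
      thus ?thesis using that by blast
    qed
    have fs: "f ` carrier G = carrier \<Gamma>"
    proof -
      have "f ` carrier G = f ` pN ` carrier F" using pN(2) by simp
      also have "\<dots> = (pK \<circ> \<phi>) ` carrier F" using f(2) by (force simp: image_iff)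
      finally show ?thesis using \<phi>s pK(2) by (metis image_comp)
    qed
    have gN: "group_hom F G pN" using F G pN(1) by (simp add: group_hom_def group_hom_axioms_def)
    have SGc: "pN ` S0 \<subseteq> carrier G" using S0(1) pN(2) by blast
    have SGg: "generate G (pN ` S0) = carrier G" using group_hom.generate_img[OF gN S0(1)] S0(3) pN(2) by simp
    obtain k where k: "k \<in> K" "k \<notin> \<phi> ` N" using \<phi>(2) by blast
    obtain x where x: "x \<in> carrier F" "\<phi> x = k" using k Kc \<phi>s by (metis imageE subsetD)
    have xN: "x \<notin> N" using x k by blast
    define h where "h = pN x"
    have h1: "h \<in> carrier G" unfolding h_def using pN(1) x(1) by (rule hom_in_carrier)
    have h2: "h \<noteq> \<one>\<^bsub>G\<^esub>" unfolding h_def using x(1) xN pN(3) by blast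
    note h = h1 h2
    have "k \<in> carrier F" using k Kc by blast
    hence "pK k = \<one>\<^bsub>\<Gamma>\<^esub>" using pK(3) k(1) by blast
    hence fh: "f h = \<one>\<^bsub>\<Gamma>\<^esub>" using f(2) x h_def by simp
    have hl: "\<And>j. h \<in> lcs G (Suc j)" using key_lemma[OF G Gam SGc finite_imageI[OF S0(2)] SGg f(1) fs wp h(1) fh] .
    show "\<not> residually_nilpotent G" using lcs_inter_one[of G h] hl h(2) by blast
    thus "\<not> para \<Gamma> G" by (simp add: para_def)
  qed
qed

end
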